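(* Consider the mass-action system in the concentrations $x_1,\dots,x_6$ with positive reaction rate constants $k_1,\dots,k_6$: \[ \begin{aligned} \dot x_1&=-k_1x_1+k_4x_3x_5, & \dot x_2&=k_1x_1-k_2x_2+k_5x_4x_5, & \dot x_3&=k_2x_2-k_3x_3-k_4x_3x_5,\\ \dot x_4&=k_3x_3-k_5x_4x_5, & \dot x_5&=-k_4x_3x_5-k_5x_4x_5+k_6x_6, & \dot x_6&=k_4x_3x_5+k_5x_4x_5-k_6x_6, \end{aligned} \] together with the conservation laws $x_1+x_2+x_3+x_4=T_1$, $x_5+x_6=T_2$, with $T_1,T_2>0$. Assume that a fixed choice of reaction rate constants satisfies $k_3>k_1$. Then $k_6\left(\frac{1}{k_2}+\frac{1}{k_3}\right)<k_6\left(\frac{1}{k_1}+\frac{1}{k_2}\right)$, and for any choice of total concentration constants $T_1,T_2>0$ verifying \[ k_6\left(\frac{1}{k_2}+\frac{1}{k_3}\right)<\frac{T_1}{T_2}<k_6\left(\frac{1}{k_1}+\frac{1}{k_2}\right), \] there exist positive constants $N_1,N_2$ such that for any values $\beta_4,\beta_5>0$ with $\beta_4>N_1$ and $\frac{\beta_5}{\beta_4}>N_2$, after replacing $k_4$ by $\overline{k_4}=\beta_4k_4$ and $k_5$ by $\overline{k_5}=\beta_5k_5$ (keeping $k_1,k_2,k_3,k_6,T_1,T_2$ unchanged), the system has at least three positive steady states, i.e. there are at least three points $x\in\mathbb R^6_{>0}$ with $\dot x_1=\dots=\dot x_6=0$, $x_1+x_2+x_3+x_4=T_1$ and $x_5+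x_6=T_2$.
   Context: This is the mass-action system of the chemical reaction network $X_1\xrightarrow{k_1}X_2\xrightarrow{k_2}X_3\xrightarrow{k_3}X_4$, $X_3+X_5\xrightarrow{k_4}X_1+X_6$, $X_4+X_5\xrightarrow{k_5}X_2+X_6$, $X_6\xrightarrow{k_6}X_5$ (a two-component system with hybrid histidine kinase); $x_i$ is the concentration of species $X_i$. A positive steady state is a point of $\mathbb R^6_{>0}$ where the right-hand sides vanish. *)

theory Defs
  imports "HOL-Analysis.Analysis"
begin

text \<open>Right-hand side of the mass-action system, with rate constants
  k1,...,k6 and concentrations x1,...,x6 (components 1..6 of x; in the type 6 the
  index 6 coincides with 0, so 1..6 enumerate all six coordinates).\<close>
definition hhk_rhs :: "real \<Rightarrow> real \<Rightarrow> real \<Rightarrow> real \<Rightarrow> real \<Rightarrow> real \<Rightarrow> real^6 \<Rightarrow> real^6" where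
  "hhk_rhs k1 k2 k3 k4 k5 k6 x =
     (let x1 = x$1; x2 = x$2; x3 = x$3; x4 = x$4; x5 = x$5; x6 = x$6 in
      (\<chi> i. if i = 1 then - k1*x1 + k4*x3*x5
             else if i = 2 then k1*x1 - k2*x2 + k5*x4*x5
             else if i = 3 then k2*x2 - k3*x3 - k4*x3*x5
             else if i = 4 then k3*x3 - k5*x4*x5
             else if i = 5 then - k4*x3*x5 - k5*x4*x5 + k6*x6
             else k4*x3*x5 + k5*x4*x5 - k6*x6))"

definition hhk_pos_steady_states ::
  "real \<Rightarrow> real \<Rightarrow> real \<Rightarrow> real \<Rightarrow> real \<Rightarrow> real \<Rightarrow> real \<Rightarrow> real \<Rightarrow> (real^6) set" where
  "hhk_pos_steady_states k1 k2 k3 k4 k5 k6 T1 T2 =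
     {x. (\<forall>i. x$i > 0) \<and> hhk_rhs k1 k2 k3 k4 k5 k6 x = 0
         \<and> x$1 + x$2 + x$3 + x$4 = T1 \<and> x$5 + x$6 = T2}"

end

theory Submission
  imports Defs
begin

definition Hf :: "real \<Rightarrow> real \<Rightarrow> real \<Rightarrow> real \<Rightarrow> real \<Rightarrow> real \<Rightarrow> real \<Rightarrow> real \<Rightarrow> real \<Rightarrow> real" where
  "Hf k1 k2 k3 K4 K5 k6 T1 T2 s =
     K4 * s^2 * ((s - T2) * k6 * (1/k1 + 1/k2) + T1) + k3 * s * ((s - T2) * k6 * (1/k2 + 1/k3) + T1)
     + (s - T2) * k6 * k3 / K5"

lemma steady:
  fixes k1 k2 k3 K4 K5 k6 T1 T2 s :: real
  assumes pos: "k1 > 0" "k2 > 0" "k3 > 0" "K4 > 0" "K5 > 0" "k6 > 0" "T1 > 0"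
    and s: "0 < s" "s < T2" and H: "Hf k1 k2 k3 K4 K5 k6 T1 T2 s = 0"
  shows "\<exists>x. x \<in> hhk_pos_steady_states k1 k2 k3 K4 K5 k6 T1 T2 \<and> x$5 = s"
proof -
  define P where "P = K4* s* s/k1 + (k3+K4* s)* s/k2 + s + k3/K5"
  have Ppos: "P > 0" unfolding P_def using pos s by (intro add_pos_pos divide_pos_pos mult_pos_pos) auto
  define x3 where "x3 = T1* s/P"
  have x3pos: "x3 > 0" unfolding x3_def using Ppos pos s by simp
  define x1 where "x1 = K4*x3* s/k1"
  define x2 where "x2 = x3*(k3+K4* s)/k2"
  define x4 where "x4 = k3*x3/(K5* s)"
  define x6 where "x6 = T2 - s"
  have pos1: "x1 > 0" "x2 > 0" "x4 > 0" "x6 > 0" unfolding x1_def x2_def x4_def x6_def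
    using pos s x3pos by (auto intro!: divide_pos_pos mult_pos_pos add_pos_pos)
  have HP: "(s - T2) * k6 * P + T1 * s * (K4* s + k3) = 0"
  proof -
    have "(s - T2) * k6 * P + T1 * s * (K4* s + k3) = Hf k1 k2 k3 K4 K5 k6 T1 T2 s"
      unfolding P_def Hf_def using pos by (simp add: field_simps power2_eq_square)
    then show ?thesis using H by simp
  qed
  have e6: "K4*x3* s + K5*x4* s - k6*x6 = 0"
  proof -
    have "K4*x3* s + K5*x4* s - k6*x6 = x3*(K4* s+k3) - k6*(T2-s)"
      unfolding x4_def x6_def using pos s by (simp add: field_simps)
    also have "\<dots> = ((s - T2) * k6 * P + T1 * s * (K4* s + k3)) / P"
      unfolding x3_def using Ppos by (simp add: field_simps)
    finally show ?thesis using HP by simp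
  qed
  have sum: "x1 + x2 + x3 + x4 = T1"
  proof -
    have "x1 + x2 + x3 + x4 = x3 * P / s"
      unfolding x1_def x2_def x4_def P_def using pos s by (simp add: field_simps power2_eq_square)
    then show ?thesis unfolding x3_def using Ppos s by simp
  qed
  define x :: "real^6" where "x = (\<chi> i. if i = 1 then x1 else if i = 2 then x2 else if i = 3 then x3
     else if i = 4 then x4 else if i = 5 then s else x6)"
  have xv: "x$1 = x1" "x$2 = x2" "x$3 = x3" "x$4 = x4" "x$5 = s" "x$6 = x6"
    unfolding x_def by simp_all
  have "\<forall>i. x$i > 0" unfolding x_def using pos1 x3pos s by simp
  moreover have "hhk_rhs k1 k2 k3 K4 K5 k6 x = 0"
  proof -
    have a1: "- k1*x1 + K4*x3* s = 0" unfolding x1_def using pos by simp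
    have a2: "k1*x1 - k2*x2 + K5*x4* s = 0" unfolding x1_def x2_def x4_def using pos s
      by (simp add: field_simps)
    have a3: "k2*x2 - k3*x3 - K4*x3* s = 0" unfolding x2_def using pos by (simp add: field_simps)
    have a4: "k3*x3 - K5*x4* s = 0" unfolding x4_def using pos s by simp
    have a5: "- K4*x3* s - K5*x4* s + k6*x6 = 0" using e6 by simp
    show ?thesis unfolding hhk_rhs_def Let_def xv
      using a1 a2 a3 a4 a5 e6 by (auto simp add: vec_eq_iff)
  qed
  moreover have "x$5 + x$6 = T2" unfolding xv x6_def by simp
  ultimately show ?thesis unfolding hhk_pos_steady_states_def using xv sum by auto
qed

lemma root_between:
  fixes f :: "real \<Rightarrow> real"
  assumes c: "continuous_on UNIV f" and lh: "lo < hi"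
    and sg: "(f lo < 0 \<and> f hi > 0) \<or> (f lo > 0 \<and> f hi < 0)"
  shows "\<exists>x. lo < x \<and> x < hi \<and> f x = 0"
proof -
  have cc: "continuous_on {lo..hi} f" using c continuous_on_subset by blast
  from sg show ?thesis
  proof
    assume h: "f lo < 0 \<and> f hi > 0"
    then obtain x where "lo \<le> x" "x \<le> hi" "f x = 0" using IVT'[of f lo 0 hi] cc lh by force
    moreover have "x \<noteq> lo" "x \<noteq> hi" using h \<open>f x = 0\<close> by auto
    ultimately show ?thesis by force
  next
    assume h: "f lo > 0 \<and> f hi < 0"
    then obtain x where "lo \<le> x" "x \<le> hi" "f x = 0" using IVT2'[of f hi 0 lo] cc lh by force
    moreover have "x \<noteq> lo" "x \<noteq> hi" using h \<open>f x = 0\<close> by auto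
    ultimately show ?thesis by force
  qed
qed

lemma Hb_neg:
  fixes k1 k2 k3 K4 K5 k6 T1 T2 :: real
  assumes pos: "k1 > 0" "k2 > 0" "k3 > 0" "K4 > 0" "K5 > 0" "k6 > 0" "T1 > 0" "T2 > 0"
    and d: "d = T2 - T1 / (k6 * (1/k1 + 1/k2))" "d > 0"
    and big: "K4 * k6 * (1/k1 + 1/k2) * d^2 \<ge> 4 * k3 * T1"
  shows "Hf k1 k2 k3 K4 K5 k6 T1 T2 (d/2) < 0"
proof -
  define L where "L = 1/k1 + 1/k2"
  define M where "M = 1/k2 + 1/k3"
  define b where "b = d/2"
  have L: "L > 0" "M > 0" unfolding L_def M_def using pos by (simp_all add: add_pos_pos)
  have dT: "d < T2" using d pos L unfolding L_def by simp
  have t1: "(b - T2) * k6 * L + T1 = - k6 * L * d / 2"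
    unfolding b_def using d L pos unfolding L_def[symmetric] by (simp add: field_simps)
  have t2: "(b - T2) * k6 * M + T1 \<le> T1" using dT d pos L unfolding b_def
    by (simp add: mult_nonpos_nonneg)
  have t3: "(b - T2) * k6 * k3 / K5 < 0" using dT d pos unfolding b_def
    by (simp add: divide_neg_pos mult_neg_pos)
  have bpos: "b > 0" using d unfolding b_def by simp
  have "Hf k1 k2 k3 K4 K5 k6 T1 T2 b = K4 * b^2 * (- k6 * L * d / 2) + k3 * b * ((b - T2) * k6 * M + T1)
     + (b - T2) * k6 * k3 / K5"
    unfolding Hf_def L_def[symmetric] M_def[symmetric] t1 ..
  also have "\<dots> < K4 * b^2 * (- k6 * L * d / 2) + k3 * b * T1"
  proof -
    have "k3 * b * ((b - T2) * k6 * M + T1) \<le> k3 * b * T1"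
      using t2 pos bpos by (intro mult_left_mono) auto
    then show ?thesis using t3 by simp
  qed
  also have "\<dots> = b * (k3 * T1 - K4 * k6 * L * d^2 / 4)"
    unfolding b_def by (simp add: field_simps power2_eq_square)
  also have "\<dots> \<le> 0" using big bpos unfolding L_def[symmetric]
    by (simp add: mult_nonneg_nonpos)
  finally show ?thesis unfolding b_def .
qed

lemma Ha_pos:
  fixes k1 k2 k3 K4 K5 k6 T1 T2 :: real
  assumes pos: "k1 > 0" "k2 > 0" "k3 > 0" "K4 > 0" "K5 > 0" "k6 > 0" "T1 > 0" "T2 > 0"
    and e: "e = T1 - T2 * k6 * (1/k2 + 1/k3)" "e > 0"
    and a: "a = k3 * e / (3 * K4 * T2 * k6 * (1/k1 + 1/k2))" "a < T2"
    and big: "K5 / K4 > 9 * T2^2 * k6^2 * (1/k1 + 1/k2) / (2 * k3 * e^2)"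
  shows "Hf k1 k2 k3 K4 K5 k6 T1 T2 a > 0"
proof -
  define L where "L = 1/k1 + 1/k2"
  define M where "M = 1/k2 + 1/k3"
  have L: "L > 0" "M > 0" unfolding L_def M_def using pos by (simp_all add: add_pos_pos)
  have apos: "a > 0" using a e pos L unfolding L_def[symmetric] by simp
  have t1: "(a - T2) * k6 * L + T1 \<ge> - T2 * k6 * L" using apos pos L by (simp add: algebra_simps)
  have t2: "(a - T2) * k6 * M + T1 \<ge> e" using apos pos L e unfolding M_def[symmetric]
    by (simp add: algebra_simps)
  have t3: "(a - T2) * k6 * k3 / K5 \<ge> - T2 * k6 * k3 / K5"
  proof -
    have "(a - T2) * (k6 * k3) \<ge> (- T2) * (k6 * k3)" using apos pos by (intro mult_right_mono) auto
    then have "(- T2) * (k6 * k3) / K5 \<le> (a - T2) * (k6 * k3) / K5" using pos by (intro divide_right_mono) auto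
    then show ?thesis by (simp add: mult.assoc)
  qed
  have aeq: "K4 * a * T2 * k6 * L = k3 * e / 3"
    unfolding a L_def[symmetric] using pos L by (simp add: field_simps)
  have "Hf k1 k2 k3 K4 K5 k6 T1 T2 a \<ge> K4 * a^2 * (- T2 * k6 * L) + k3 * a * e - T2 * k6 * k3 / K5"
  proof -
    have "K4 * a^2 * ((a - T2) * k6 * L + T1) \<ge> K4 * a^2 * (- T2 * k6 * L)"
      using t1 pos by (intro mult_left_mono) auto
    moreover have "k3 * a * ((a - T2) * k6 * M + T1) \<ge> k3 * a * e"
      using t2 pos apos by (intro mult_left_mono) auto
    ultimately show ?thesis using t3 unfolding Hf_def L_def[symmetric] M_def[symmetric] by simp
  qed
  also have "K4 * a^2 * (- T2 * k6 * L) = - a * (k3 * e / 3)"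
    using aeq by (simp add: power2_eq_square algebra_simps)
  finally have h1: "Hf k1 k2 k3 K4 K5 k6 T1 T2 a \<ge> 2/3 * k3 * a * e - T2 * k6 * k3 / K5" by (simp add: algebra_simps)
  have "2/3 * k3 * a * e = 2 * k3^2 * e^2 / (9 * K4 * T2 * k6 * L)"
    unfolding a L_def[symmetric] using pos L by (simp add: field_simps power2_eq_square)
  moreover have "T2 * k6 * k3 / K5 < 2 * k3^2 * e^2 / (9 * K4 * T2 * k6 * L)"
  proof -
    have "9 * T2^2 * k6^2 * L / (2 * k3 * e^2) < K5 / K4" using big unfolding L_def .
    then have "9 * T2^2 * k6^2 * L * K4 < K5 * (2 * k3 * e^2)" using pos e(2) L
      by (simp add: field_simps)
    then show ?thesis using pos e(2) L by (simp add: field_simps power2_eq_square)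
  qed
  ultimately show ?thesis using h1 by linarith
qed

theorem theorem1p1:
  fixes k1 k2 k3 k4 k5 k6 :: real
  assumes "k1 > 0" "k2 > 0" "k3 > 0" "k4 > 0" "k5 > 0" "k6 > 0"
    and "k3 > k1"
  shows "k6 * (1/k2 + 1/k3) < k6 * (1/k1 + 1/k2) \<and>
    (\<forall>T1 T2 :: real. T1 > 0 \<longrightarrow> T2 > 0 \<longrightarrow>
       k6 * (1/k2 + 1/k3) < T1 / T2 \<longrightarrow> T1 / T2 < k6 * (1/k1 + 1/k2) \<longrightarrow>
       (\<exists>N1 N2 :: real. N1 > 0 \<and> N2 > 0 \<and>
          (\<forall>\<beta>4 \<beta>5 :: real. \<beta>4 > 0 \<longrightarrow> \<beta>5 > 0 \<longrightarrow> \<beta>4 > N1 \<longrightarrow> \<beta>5 / \<beta>4 > N2 \<longrightarrow>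
             (\<exists>S. finite S \<and> card S \<ge> 3 \<and>
                S \<subseteq> hhk_pos_steady_states k1 k2 k3 (\<beta>4 * k4) (\<beta>5 * k5) k6 T1 T2))))"
proof
  have "1/k3 < 1/k1" using assms by (simp add: frac_less2)
  then show "k6 * (1/k2 + 1/k3) < k6 * (1/k1 + 1/k2)" using assms by simp
next
  show "\<forall>T1 T2 :: real. T1 > 0 \<longrightarrow> T2 > 0 \<longrightarrow>
       k6 * (1/k2 + 1/k3) < T1 / T2 \<longrightarrow> T1 / T2 < k6 * (1/k1 + 1/k2) \<longrightarrow>
       (\<exists>N1 N2 :: real. N1 > 0 \<and> N2 > 0 \<and>
          (\<forall>\<beta>4 \<beta>5 :: real. \<beta>4 > 0 \<longrightarrow> \<beta>5 > 0 \<longrightarrow> \<beta>4 > N1 \<longrightarrow> \<beta>5 / \<beta>4 > N2 \<longrightarrow>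
             (\<exists>S. finite S \<and> card S \<ge> 3 \<and>
                S \<subseteq> hhk_pos_steady_states k1 k2 k3 (\<beta>4 * k4) (\<beta>5 * k5) k6 T1 T2)))"
  proof (intro allI impI)
    fix T1 T2 :: real
    assume T: "T1 > 0" "T2 > 0" and r1: "k6 * (1/k2 + 1/k3) < T1 / T2"
      and r2: "T1 / T2 < k6 * (1/k1 + 1/k2)"
    define L where "L = 1/k1 + 1/k2"
    define M where "M = 1/k2 + 1/k3"
    have L: "L > 0" "M > 0" unfolding L_def M_def using assms by (simp_all add: add_pos_pos)
    define d where "d = T2 - T1 / (k6 * L)"
    define e where "e = T1 - T2 * k6 * M"
    have dpos: "d > 0"
    proof -
      have "T1 < k6 * L * T2" using r2 T unfolding L_def by (simp add: field_simps)
      then have "T1 / (k6 * L) < T2" using L assms by (simp add: field_simps)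
      then show ?thesis unfolding d_def by simp
    qed
    have dT: "d < T2" unfolding d_def using T L assms by simp
    have epos: "e > 0"
    proof -
      have "k6 * M * T2 < T1" using r1 T unfolding M_def by (simp add: field_simps)
      then show ?thesis unfolding e_def by (simp add: algebra_simps)
    qed
    define C1 where "C1 = 4 * k3 * T1 / (k6 * L * d^2)"
    define C2 where "C2 = 2 * k3 * e / (3 * T2 * k6 * L * d)"
    define C3 where "C3 = 9 * T2^2 * k6^2 * L / (2 * k3 * e^2)"
    have C: "C1 > 0" "C2 > 0" "C3 > 0" unfolding C1_def C2_def C3_def
      using assms T L dpos epos by simp_all
    show "\<exists>N1 N2 :: real. N1 > 0 \<and> N2 > 0 \<and>
          (\<forall>\<beta>4 \<beta>5 :: real. \<beta>4 > 0 \<longrightarrow> \<beta>5 > 0 \<longrightarrow> \<beta>4 > N1 \<longrightarrow> \<beta>5 / \<beta>4 > N2 \<longrightarrow>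
             (\<exists>S. finite S \<and> card S \<ge> 3 \<and>
                S \<subseteq> hhk_pos_steady_states k1 k2 k3 (\<beta>4 * k4) (\<beta>5 * k5) k6 T1 T2))"
    proof (rule exI[of _ "(C1 + C2 + 1) / k4"], rule exI[of _ "(C3 + 1) * k4 / k5"], intro conjI allI impI)
      show "(C1 + C2 + 1) / k4 > 0" "(C3 + 1) * k4 / k5 > 0" using C assms by simp_all
      fix \<beta>4 \<beta>5 :: real
      assume b: "\<beta>4 > 0" "\<beta>5 > 0" "\<beta>4 > (C1 + C2 + 1) / k4" "\<beta>5 / \<beta>4 > (C3 + 1) * k4 / k5"
      define K4 where "K4 = \<beta>4 * k4"
      define K5 where "K5 = \<beta>5 * k5"
      have K: "K4 > 0" "K5 > 0" unfolding K4_def K5_def using b assms by simp_all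
      have K4big: "K4 > C1 + C2 + 1" unfolding K4_def using b assms by (simp add: field_simps)
      have K5big: "K5 / K4 > C3"
      proof -
        have "K5 / K4 = (\<beta>5 / \<beta>4) * (k5 / k4)" unfolding K4_def K5_def by simp
        moreover have "(\<beta>5 / \<beta>4) * (k5 / k4) > ((C3 + 1) * k4 / k5) * (k5 / k4)"
          using b assms by (intro mult_strict_right_mono) auto
        moreover have "((C3 + 1) * k4 / k5) * (k5 / k4) = C3 + 1" using assms by simp
        ultimately show ?thesis by simp
      qed
      define a where "a = k3 * e / (3 * K4 * T2 * k6 * L)"
      have apos: "a > 0" unfolding a_def using assms T K L epos by simp
      have ad: "a < d/2"
      proof -
        have "K4 > C2" using K4big C by simp
        then have "2 * k3 * e < K4 * (3 * T2 * k6 * L * d)" unfolding C2_def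
          using assms T L dpos by (simp add: field_simps)
        then show ?thesis unfolding a_def using assms T L dpos K by (simp add: field_simps)
      qed
      define H where "H = Hf k1 k2 k3 K4 K5 k6 T1 T2"
      have H0: "H 0 < 0" unfolding H_def Hf_def using assms T K by (simp add: divide_neg_pos mult_neg_pos)
      have HT: "H T2 > 0" unfolding H_def Hf_def using assms T K by (simp add: add_pos_pos)
      have Hb: "H (d/2) < 0" unfolding H_def
      proof (rule Hb_neg)
        show "d = T2 - T1 / (k6 * (1 / k1 + 1 / k2))" unfolding d_def L_def ..
        have "K4 > C1" using K4big C by simp
        then show "4 * k3 * T1 \<le> K4 * k6 * (1 / k1 + 1 / k2) * d\<^sup>2" unfolding C1_def L_def[symmetric]
          using assms T L dpos by (simp add: field_simps)
      qed (use assms T K dpos in auto)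
      have Ha: "H a > 0" unfolding H_def
      proof (rule Ha_pos)
        show "e = T1 - T2 * k6 * (1 / k2 + 1 / k3)" unfolding e_def M_def ..
        show "a = k3 * e / (3 * K4 * T2 * k6 * (1 / k1 + 1 / k2))" unfolding a_def L_def ..
        show "a < T2" using ad dT apos by simp
        show "K5 / K4 > 9 * T2\<^sup>2 * k6\<^sup>2 * (1 / k1 + 1 / k2) / (2 * k3 * e\<^sup>2)"
          using K5big unfolding C3_def L_def .
      qed (use assms T K epos in auto)
      have cont: "continuous_on UNIV H" unfolding H_def Hf_def using K by (intro continuous_intros) auto
      obtain s1 where s1: "0 < s1" "s1 < a" "H s1 = 0" using root_between[OF cont apos] H0 Ha by blast
      obtain s2 where s2: "a < s2" "s2 < d/2" "H s2 = 0" using root_between[OF cont ad] Ha Hb by blast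
      have dT2: "d/2 < T2" using dT dpos by simp
      obtain s3 where s3: "d/2 < s3" "s3 < T2" "H s3 = 0" using root_between[OF cont dT2] Hb HT by blast
      obtain p1 where p1: "p1 \<in> hhk_pos_steady_states k1 k2 k3 K4 K5 k6 T1 T2" "p1$5 = s1"
        using steady[of k1 k2 k3 K4 K5 k6 T1 s1 T2] assms T K s1 ad dT unfolding H_def by auto
      obtain p2 where p2: "p2 \<in> hhk_pos_steady_states k1 k2 k3 K4 K5 k6 T1 T2" "p2$5 = s2"
        using steady[of k1 k2 k3 K4 K5 k6 T1 s2 T2] assms T K s2 apos dT unfolding H_def by auto
      obtain p3 where p3: "p3 \<in> hhk_pos_steady_states k1 k2 k3 K4 K5 k6 T1 T2" "p3$5 = s3"
        using steady[of k1 k2 k3 K4 K5 k6 T1 s3 T2] assms T K s3 dpos unfolding H_def by auto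
      have ne: "p1 \<noteq> p2" "p1 \<noteq> p3" "p2 \<noteq> p3" using p1 p2 p3 s1 s2 s3 by auto
      show "\<exists>S. finite S \<and> card S \<ge> 3 \<and>
                S \<subseteq> hhk_pos_steady_states k1 k2 k3 (\<beta>4 * k4) (\<beta>5 * k5) k6 T1 T2"
        by (rule exI[of _ "{p1, p2, p3}"]) (use ne p1 p2 p3 in \<open>auto simp: K4_def K5_def\<close>)
    qed
  qed
qed
end
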